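(* Let $\Sigma=(I,X,\mathcal U,\phi,Y,h)$ be a forward complete control system with outputs. Then the following are equivalent: (1) $\Sigma$ is ISS and $h$ is $\mathcal K$-bounded; (2) $\Sigma$ is IOS and IOSS.
   Context: Let $I\in\{\mathbb N_0,\mathbb R_0^+\}$. A forward complete control system with outputs $\Sigma=(I,X,\mathcal U,\phi,Y,h)$ consists of: a normed space $(X,\|\cdot\|_X)$; a vector space $U$ and a normed linear subspace $(\mathcal U,\|\cdot\|_{\mathcal U})$ of $\{u:I\to U\}$ such that for all $u\in\mathcal U,\tau\in I$, $u(\cdot+\tau)\in\mathcal U$ with $\|u(\cdot+\tau)\|_{\mathcal U}\le\|u\|_{\mathcal U}$, and for $t_2\ge t_1\ge 0$ the function $u|_{[t_1,t_2]}$ ($u$ on $[t_1,t_2]$, $0$ elsewhere) lies in $\mathcal U$ with $\|u|_{[t_1,t_2]}\|_{\mathcal U}\le\|u\|_{\mathcal U}$; a map $\phi:I\times X\times\mathcal U\to X$ with $\phi(0,x,u)=x$, causality (if $u,\tilde u$ agree on $[0,t]$ then $\phi(t,x,u)=\phi(t,x,\tilde u)$), and cocycle property $\phi(t+s,x,u)=\phi(s,\phi(t,x,u),u(t+\cdot))$; a normed space $Y$ and $h:X\times U\to Y$. Write $y(t,x,u)=h(\phi(t,x,u),u(t))$. $\mathcal K,\mathcal K_\infty,\mathcal{KL}$ are the standard comparison function classes. ISS: $\exists\beta\in\mathcal{KL},\gamma\in\mathcal K_\infty$ with $\|\phi(t,x,u)\|_X\le\beta(\|x\|_X,t)+\gamma(\|u\|_{\mathcal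 U})$ for all $x\in X,u\in\mathcal U,t\in I$. IOS: $\exists\beta\in\mathcal{KL},\gamma\in\mathcal K_\infty$ with $\|y(t,x,u)\|_Y\le\beta(\|x\|_X,t)+\gamma(\|u\|_{\mathcal U})$ for all $x,u,t$. IOSS: $\exists\beta\in\mathcal{KL},\gamma_1,\gamma_2\in\mathcal K$ with $\|\phi(t,x,u)\|_X\le\beta(\|x\|_X,t)+\gamma_1(\|u|_{[0,t]}\|_{\mathcal U})+\gamma_2(\sup_{s\in[0,t]}\|y(s,x,u)\|_Y)$ for all $x,u,t$. $h$ is $\mathcal K$-bounded: there exist $\sigma_1,\gamma_1\in\mathcal K$ with $\|h(x,u(0))\|_Y\le\sigma_1(\|x\|_X)+\gamma_1(\|u\|_{\mathcal U})$ for all $x\in X,u\in\mathcal U$. *)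

theory Defs
  imports "HOL-Analysis.Analysis"
begin

definition class_K :: "(real \<Rightarrow> real) \<Rightarrow> bool" where
  "class_K \<gamma> \<longleftrightarrow> continuous_on {0..} \<gamma> \<and> strict_mono_on {0..} \<gamma> \<and> \<gamma> 0 = 0"

definition class_Kinf :: "(real \<Rightarrow> real) \<Rightarrow> bool" where
  "class_Kinf \<gamma> \<longleftrightarrow> class_K \<gamma> \<and> filterlim \<gamma> at_top at_top"

definition class_KL :: "(real \<Rightarrow> real \<Rightarrow> real) \<Rightarrow> bool" where
  "class_KL \<beta> \<longleftrightarrow>
     (\<forall>t\<ge>0. class_K (\<lambda>r. \<beta> r t)) \<and>
     (\<forall>r\<ge>0. antimono_on {0..} (\<lambda>t. \<beta> r t) \<and> ((\<lambda>t. \<beta> r t) \<longlongrightarrow> 0) at_top)"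

text \<open>Time axis I: if disc then I = N_0 (embedded in the reals), else I = [0,\<infinity>).
  Inputs are functions real => 'u that vanish outside I.\<close>

definition time_set :: "bool \<Rightarrow> real set" where
  "time_set disc = (if disc then range real else {0..})"

definition shift_inp :: "bool \<Rightarrow> (real \<Rightarrow> 'u::real_vector) \<Rightarrow> real \<Rightarrow> real \<Rightarrow> 'u" where
  "shift_inp disc u \<tau> = (\<lambda>s. if s \<in> time_set disc then u (s + \<tau>) else 0)"

definition restr_inp :: "(real \<Rightarrow> 'u::real_vector) \<Rightarrow> real \<Rightarrow> real \<Rightarrow> real \<Rightarrow> 'u" where
  "restr_inp u t1 t2 = (\<lambda>s. if t1 \<le> s \<and> s \<le> t2 then u s else 0)"

definition control_system ::
  "bool \<Rightarrow> (real \<Rightarrow> 'u::real_vector) set \<Rightarrow> ((real \<Rightarrow> 'u) \<Rightarrow> real)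
   \<Rightarrow> (real \<Rightarrow> 'x::real_normed_vector \<Rightarrow> (real \<Rightarrow> 'u) \<Rightarrow> 'x) \<Rightarrow> bool" where
  "control_system disc Uc nU \<phi> \<longleftrightarrow>
     \<comment> \<open>inputs are functions on I (zero outside I)\<close>
     (\<forall>u\<in>Uc. \<forall>s. s \<notin> time_set disc \<longrightarrow> u s = 0) \<and>
     \<comment> \<open>Uc is a linear subspace\<close>
     (\<lambda>s. 0) \<in> Uc \<and>
     (\<forall>u\<in>Uc. \<forall>v\<in>Uc. (\<lambda>s. u s + v s) \<in> Uc) \<and>
     (\<forall>u\<in>Uc. \<forall>c. (\<lambda>s. c *\<^sub>R u s) \<in> Uc) \<and>
     \<comment> \<open>nU is a norm on Uc\<close>
     (\<forall>u\<in>Uc. 0 \<le> nU u) \<and>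
     (\<forall>u\<in>Uc. nU u = 0 \<longleftrightarrow> u = (\<lambda>s. 0)) \<and>
     (\<forall>u\<in>Uc. \<forall>c. nU (\<lambda>s. c *\<^sub>R u s) = \<bar>c\<bar> * nU u) \<and>
     (\<forall>u\<in>Uc. \<forall>v\<in>Uc. nU (\<lambda>s. u s + v s) \<le> nU u + nU v) \<and>
     \<comment> \<open>shift invariance\<close>
     (\<forall>u\<in>Uc. \<forall>\<tau>\<in>time_set disc.
        shift_inp disc u \<tau> \<in> Uc \<and> nU (shift_inp disc u \<tau>) \<le> nU u) \<and>
     \<comment> \<open>restriction (concatenation with zero)\<close>
     (\<forall>u\<in>Uc. \<forall>t1 t2. 0 \<le> t1 \<longrightarrow> t1 \<le> t2 \<longrightarrow>
        restr_inp u t1 t2 \<in> Uc \<and> nU (restr_inp u t1 t2) \<le> nU u) \<and>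
     \<comment> \<open>identity property\<close>
     (\<forall>x. \<forall>u\<in>Uc. \<phi> 0 x u = x) \<and>
     \<comment> \<open>causality\<close>
     (\<forall>t\<in>time_set disc. \<forall>x. \<forall>u\<in>Uc. \<forall>v\<in>Uc.
        (\<forall>s\<in>time_set disc. s \<le> t \<longrightarrow> u s = v s) \<longrightarrow> \<phi> t x u = \<phi> t x v) \<and>
     \<comment> \<open>cocycle property\<close>
     (\<forall>t\<in>time_set disc. \<forall>s\<in>time_set disc. \<forall>x. \<forall>u\<in>Uc.
        \<phi> (t + s) x u = \<phi> s (\<phi> t x u) (shift_inp disc u t))"

definition out :: "(real \<Rightarrow> 'x \<Rightarrow> (real \<Rightarrow> 'u) \<Rightarrow> 'x) \<Rightarrow> ('x \<Rightarrow> 'u \<Rightarrow> 'y)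
                   \<Rightarrow> real \<Rightarrow> 'x \<Rightarrow> (real \<Rightarrow> 'u) \<Rightarrow> 'y" where
  "out \<phi> h t x u = h (\<phi> t x u) (u t)"

definition ISS ::
  "bool \<Rightarrow> (real \<Rightarrow> 'u::real_vector) set \<Rightarrow> ((real \<Rightarrow> 'u) \<Rightarrow> real)
   \<Rightarrow> (real \<Rightarrow> 'x::real_normed_vector \<Rightarrow> (real \<Rightarrow> 'u) \<Rightarrow> 'x) \<Rightarrow> bool" where
  "ISS disc Uc nU \<phi> \<longleftrightarrow> (\<exists>\<beta> \<gamma>. class_KL \<beta> \<and> class_Kinf \<gamma> \<and>
     (\<forall>x. \<forall>u\<in>Uc. \<forall>t\<in>time_set disc. norm (\<phi> t x u) \<le> \<beta> (norm x) t + \<gamma> (nU u)))"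

definition IOS ::
  "bool \<Rightarrow> (real \<Rightarrow> 'u::real_vector) set \<Rightarrow> ((real \<Rightarrow> 'u) \<Rightarrow> real)
   \<Rightarrow> (real \<Rightarrow> 'x::real_normed_vector \<Rightarrow> (real \<Rightarrow> 'u) \<Rightarrow> 'x)
   \<Rightarrow> ('x \<Rightarrow> 'u \<Rightarrow> 'y::real_normed_vector) \<Rightarrow> bool" where
  "IOS disc Uc nU \<phi> h \<longleftrightarrow> (\<exists>\<beta> \<gamma>. class_KL \<beta> \<and> class_Kinf \<gamma> \<and>
     (\<forall>x. \<forall>u\<in>Uc. \<forall>t\<in>time_set disc. norm (out \<phi> h t x u) \<le> \<beta> (norm x) t + \<gamma> (nU u)))"

text \<open>IOSS. If the output is unbounded on [0,t] the right-hand side is +\<infinity>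
  (convention gamma(\<infinity>) = \<infinity>) and the estimate is void; hence the bdd_above guard.\<close>

definition IOSS ::
  "bool \<Rightarrow> (real \<Rightarrow> 'u::real_vector) set \<Rightarrow> ((real \<Rightarrow> 'u) \<Rightarrow> real)
   \<Rightarrow> (real \<Rightarrow> 'x::real_normed_vector \<Rightarrow> (real \<Rightarrow> 'u) \<Rightarrow> 'x)
   \<Rightarrow> ('x \<Rightarrow> 'u \<Rightarrow> 'y::real_normed_vector) \<Rightarrow> bool" where
  "IOSS disc Uc nU \<phi> h \<longleftrightarrow> (\<exists>\<beta> \<gamma>1 \<gamma>2. class_KL \<beta> \<and> class_K \<gamma>1 \<and> class_K \<gamma>2 \<and>
     (\<forall>x. \<forall>u\<in>Uc. \<forall>t\<in>time_set disc.
        bdd_above ((\<lambda>s. norm (out \<phi> h s x u)) ` {s\<in>time_set disc. s \<le> t}) \<longrightarrow>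
        norm (\<phi> t x u) \<le> \<beta> (norm x) t + \<gamma>1 (nU (restr_inp u 0 t))
          + \<gamma>2 (SUP s\<in>{s\<in>time_set disc. s \<le> t}. norm (out \<phi> h s x u))))"

definition K_bounded ::
  "(real \<Rightarrow> 'u::real_vector) set \<Rightarrow> ((real \<Rightarrow> 'u) \<Rightarrow> real)
   \<Rightarrow> ('x::real_normed_vector \<Rightarrow> 'u \<Rightarrow> 'y::real_normed_vector) \<Rightarrow> bool" where
  "K_bounded Uc nU h \<longleftrightarrow> (\<exists>\<sigma>1 \<gamma>1. class_K \<sigma>1 \<and> class_K \<gamma>1 \<and>
     (\<forall>x. \<forall>u\<in>Uc. norm (h x (u 0)) \<le> \<sigma>1 (norm x) + \<gamma>1 (nU u)))"

end

theory Submission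
  imports Defs "HOL-Real_Asymp.Real_Asymp"
begin

lemma K_strict: "class_K f \<Longrightarrow> 0 \<le> a \<Longrightarrow> a < b \<Longrightarrow> f a < f b"
  unfolding class_K_def by (metis atLeast_iff less_eq_real_def order_trans strict_mono_onD)

lemma K_mono: "class_K f \<Longrightarrow> 0 \<le> a \<Longrightarrow> a \<le> b \<Longrightarrow> f a \<le> f b"
  using K_strict[of f a b] by (cases "a = b") auto

lemma K_nonneg: "class_K f \<Longrightarrow> 0 \<le> a \<Longrightarrow> 0 \<le> f a"
  using K_mono[of f 0 a] by (simp add: class_K_def)

lemma K_comp: assumes "class_K f" "class_K g" shows "class_K (\<lambda>s. f (g s))"
proof -
  have img: "g ` {0..} \<subseteq> {0..}" using K_nonneg[OF assms(2)] by auto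
  have "continuous_on {0..} (\<lambda>s. f (g s))"
    using continuous_on_compose2[of "{0..}" f "{0..}" g] assms img unfolding class_K_def by auto
  moreover have "strict_mono_on {0..} (\<lambda>s. f (g s))"
    by (rule strict_mono_onI) (use assms K_strict K_nonneg in auto)
  ultimately show ?thesis using assms unfolding class_K_def by auto
qed

lemma K_id: "class_K (\<lambda>s. s)"
  unfolding class_K_def by (auto intro: strict_mono_onI continuous_intros)

lemma K_lin: "0 < c \<Longrightarrow> class_K (\<lambda>s. c * s)"
  unfolding class_K_def by (auto intro: strict_mono_onI continuous_intros)

lemma K_scale: "class_K f \<Longrightarrow> 0 < c \<Longrightarrow> class_K (\<lambda>s. f (c * s))"
  using K_comp[OF _ K_lin] by blast

lemma K_add: assumes "class_K f" "class_K g" shows "class_K (\<lambda>s. f s + g s)"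
  using assms unfolding class_K_def
  by (auto intro!: strict_mono_onI continuous_intros add_strict_mono dest: strict_mono_onD)

lemma Kinf_K: "class_Kinf f \<Longrightarrow> class_K f"
  by (simp add: class_Kinf_def)

lemma Kinf_of: assumes "class_K f" shows "class_Kinf (\<lambda>s. f s + s)"
proof -
  have "class_K (\<lambda>s. f s + s)" using K_add[OF assms K_id] .
  moreover have "filterlim (\<lambda>s. f s + s) at_top at_top"
  proof (rule filterlim_at_top_mono[OF filterlim_ident])
    show "\<forall>\<^sub>F x in at_top. x \<le> f x + x"
      using eventually_ge_at_top[of "0::real"] by eventually_elim (use K_nonneg[OF assms] in auto)
  qed
  ultimately show ?thesis by (simp add: class_Kinf_def)
qed

lemma K_sum2: assumes "class_K f" "0 \<le> a" "0 \<le> b" shows "f (a + b) \<le> f (2*a) + f (2*b)"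
proof (cases "a \<le> b")
  case True
  then have "f (a+b) \<le> f (2*b)" using K_mono[OF assms(1)] assms by auto
  then show ?thesis using K_nonneg[OF assms(1), of "2*a"] assms by auto
next
  case False
  then have "f (a+b) \<le> f (2*a)" using K_mono[OF assms(1)] assms by auto
  then show ?thesis using K_nonneg[OF assms(1), of "2*b"] assms by auto
qed

lemma K_sum3: assumes "class_K f" "0 \<le> a" "0 \<le> b" "0 \<le> c"
  shows "f (a + b + c) \<le> f (3*a) + f (3*b) + f (3*c)"
proof -
  have n: "0 \<le> f (3*a)" "0 \<le> f (3*b)" "0 \<le> f (3*c)" using K_nonneg[OF assms(1)] assms by auto
  have "f (a+b+c) \<le> f (3*a) \<or> f (a+b+c) \<le> f (3*b) \<or> f (a+b+c) \<le> f (3*c)"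
  proof (cases "b \<le> a \<and> c \<le> a")
    case True then show ?thesis using K_mono[OF assms(1), of "a+b+c" "3*a"] assms by auto
  next
    case F1: False
    show ?thesis
    proof (cases "c \<le> b")
      case True then show ?thesis using F1 K_mono[OF assms(1), of "a+b+c" "3*b"] assms by auto
    next
      case False then show ?thesis using F1 K_mono[OF assms(1), of "a+b+c" "3*c"] assms by auto
    qed
  qed
  then show ?thesis using n by linarith
qed

lemma KL_K: "class_KL \<beta> \<Longrightarrow> 0 \<le> t \<Longrightarrow> class_K (\<lambda>r. \<beta> r t)"
  by (simp add: class_KL_def)

lemma KL_nonneg: "class_KL \<beta> \<Longrightarrow> 0 \<le> r \<Longrightarrow> 0 \<le> t \<Longrightarrow> 0 \<le> \<beta> r t"
  using K_nonneg[OF KL_K] by blast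

lemma KL_mono: "class_KL \<beta> \<Longrightarrow> 0 \<le> r \<Longrightarrow> r \<le> r' \<Longrightarrow> 0 \<le> t \<Longrightarrow> \<beta> r t \<le> \<beta> r' t"
  using K_mono[OF KL_K] by blast

lemma KL_anti: "class_KL \<beta> \<Longrightarrow> 0 \<le> r \<Longrightarrow> 0 \<le> t \<Longrightarrow> t \<le> t' \<Longrightarrow> \<beta> r t' \<le> \<beta> r t"
proof -
  assume a: "class_KL \<beta>" "0 \<le> r" "0 \<le> t" "t \<le> t'"
  then have "antimono_on {0..} (\<beta> r)" unfolding class_KL_def by auto
  from monotone_onD[OF this, of t t'] show ?thesis using a by simp
qed

lemma KL_lim: "class_KL \<beta> \<Longrightarrow> 0 \<le> r \<Longrightarrow> ((\<lambda>t. \<beta> r t) \<longlongrightarrow> 0) at_top"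
  unfolding class_KL_def by auto

lemma KL_intro:
  assumes "\<And>t. 0 \<le> t \<Longrightarrow> class_K (\<lambda>r. \<beta> r t)"
    and "\<And>r t t'. 0 \<le> r \<Longrightarrow> 0 \<le> t \<Longrightarrow> t \<le> t' \<Longrightarrow> \<beta> r t' \<le> \<beta> r t"
    and "\<And>r. 0 \<le> r \<Longrightarrow> ((\<lambda>t. \<beta> r t) \<longlongrightarrow> 0) at_top"
  shows "class_KL \<beta>"
  unfolding class_KL_def using assms by (auto intro: monotone_onI)

lemma KL_add: assumes "class_KL \<beta>1" "class_KL \<beta>2" shows "class_KL (\<lambda>r t. \<beta>1 r t + \<beta>2 r t)"
proof (rule KL_intro)
  fix t :: real assume "0 \<le> t" then show "class_K (\<lambda>r. \<beta>1 r t + \<beta>2 r t)"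
    using K_add[OF KL_K[OF assms(1)] KL_K[OF assms(2)]] by blast
next
  fix r t t' :: real assume "0 \<le> r" "0 \<le> t" "t \<le> t'"
  then show "\<beta>1 r t' + \<beta>2 r t' \<le> \<beta>1 r t + \<beta>2 r t"
    using KL_anti[OF assms(1)] KL_anti[OF assms(2)] by (meson add_mono)
next
  fix r :: real assume "0 \<le> r"
  then show "((\<lambda>t. \<beta>1 r t + \<beta>2 r t) \<longlongrightarrow> 0) at_top"
    using tendsto_add_zero[OF KL_lim[OF assms(1)] KL_lim[OF assms(2)]] by blast
qed

lemma KL_outer: assumes f: "class_K f" and b: "class_KL \<beta>" shows "class_KL (\<lambda>r t. f (\<beta> r t))"
proof (rule KL_intro)
  fix t :: real assume "0 \<le> t" then show "class_K (\<lambda>r. f (\<beta> r t))" using K_comp[OF f KL_K[OF b]] by blast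
next
  fix r t t' :: real assume "0 \<le> r" "0 \<le> t" "t \<le> t'"
  then show "f (\<beta> r t') \<le> f (\<beta> r t)" using K_mono[OF f] KL_anti[OF b] KL_nonneg[OF b] by auto
next
  fix r :: real assume r: "0 \<le> r"
  have "((\<lambda>t. f (\<beta> r t)) \<longlongrightarrow> f 0) at_top"
  proof (rule continuous_on_tendsto_compose[of "{0..}" f "\<lambda>t. \<beta> r t" 0])
    show "continuous_on {0..} f" using f by (simp add: class_K_def)
    show "((\<lambda>t. \<beta> r t) \<longlongrightarrow> 0) at_top" using KL_lim[OF b r] .
    show "(0::real) \<in> {0..}" by simp
    show "\<forall>\<^sub>F t in at_top. \<beta> r t \<in> {0..}"
      using eventually_ge_at_top[of "0::real"] by eventually_elim (use KL_nonneg[OF b r] in auto)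
  qed
  then show "((\<lambda>t. f (\<beta> r t)) \<longlongrightarrow> 0) at_top" using f by (simp add: class_K_def)
qed

lemma KL_inner: assumes g: "class_K g" and b: "class_KL \<beta>" shows "class_KL (\<lambda>r t. \<beta> (g r) t)"
proof (rule KL_intro)
  fix t :: real assume "0 \<le> t" then show "class_K (\<lambda>r. \<beta> (g r) t)" using K_comp[OF KL_K[OF b] g] by blast
next
  fix r t t' :: real assume "0 \<le> r" "0 \<le> t" "t \<le> t'"
  then show "\<beta> (g r) t' \<le> \<beta> (g r) t" using KL_anti[OF b] K_nonneg[OF g] by auto
next
  fix r :: real assume r: "0 \<le> r"
  show "((\<lambda>t. \<beta> (g r) t) \<longlongrightarrow> 0) at_top" using KL_lim[OF b] K_nonneg[OF g r] by auto
qed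

lemma KL_KL: assumes b1: "class_KL \<beta>1" and b2: "class_KL \<beta>2"
  shows "class_KL (\<lambda>r t. \<beta>1 (\<beta>2 r t) t)"
proof (rule KL_intro)
  fix t :: real assume "0 \<le> t" then show "class_K (\<lambda>r. \<beta>1 (\<beta>2 r t) t)"
    using K_comp[OF KL_K[OF b1] KL_K[OF b2]] by blast
next
  fix r t t' :: real assume h: "0 \<le> r" "0 \<le> t" "t \<le> t'"
  have "\<beta>1 (\<beta>2 r t') t' \<le> \<beta>1 (\<beta>2 r t') t" using KL_anti[OF b1] KL_nonneg[OF b2] h by auto
  also have "\<dots> \<le> \<beta>1 (\<beta>2 r t) t" using KL_mono[OF b1] KL_nonneg[OF b2] KL_anti[OF b2] h by auto
  finally show "\<beta>1 (\<beta>2 r t') t' \<le> \<beta>1 (\<beta>2 r t) t" .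
next
  fix r :: real assume r: "0 \<le> r"
  have "class_KL (\<lambda>r t. \<beta>1 (\<beta>2 r t) 0)" using KL_outer[OF KL_K[OF b1] b2] by simp
  then have l: "((\<lambda>t. \<beta>1 (\<beta>2 r t) 0) \<longlongrightarrow> 0) at_top" using KL_lim r by blast
  show "((\<lambda>t. \<beta>1 (\<beta>2 r t) t) \<longlongrightarrow> 0) at_top"
  proof (rule tendsto_sandwich[OF _ _ tendsto_const l])
    show "\<forall>\<^sub>F t in at_top. 0 \<le> \<beta>1 (\<beta>2 r t) t"
      using eventually_ge_at_top[of "0::real"] by eventually_elim (use KL_nonneg b1 b2 r in metis)
    show "\<forall>\<^sub>F t in at_top. \<beta>1 (\<beta>2 r t) t \<le> \<beta>1 (\<beta>2 r t) 0"
      using eventually_ge_at_top[of "0::real"] by eventually_elim (use KL_anti[OF b1] KL_nonneg[OF b2] r in auto)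
  qed
qed

lemma KL_time: assumes b: "class_KL \<beta>" and tn: "\<And>t. 0 \<le> t \<Longrightarrow> 0 \<le> \<tau> t"
  and tm: "\<And>t t'. 0 \<le> t \<Longrightarrow> t \<le> t' \<Longrightarrow> \<tau> t \<le> \<tau> t'" and tl: "filterlim \<tau> at_top at_top"
  shows "class_KL (\<lambda>r t. \<beta> r (\<tau> t))"
proof (rule KL_intro)
  fix t :: real assume "0 \<le> t" then show "class_K (\<lambda>r. \<beta> r (\<tau> t))" using KL_K[OF b] tn by blast
next
  fix r t t' :: real assume "0 \<le> r" "0 \<le> t" "t \<le> t'"
  then show "\<beta> r (\<tau> t') \<le> \<beta> r (\<tau> t)" using KL_anti[OF b] tn tm by auto
next
  fix r :: real assume r: "0 \<le> r"
  show "((\<lambda>t. \<beta> r (\<tau> t)) \<longlongrightarrow> 0) at_top"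
    using filterlim_compose[OF KL_lim[OF b r] tl] .
qed


definition tau :: "real \<Rightarrow> real" where "tau t = real (nat \<lfloor>t/2\<rfloor>)"

lemma tau_props:
  assumes "0 \<le> t" shows "0 \<le> tau t" "tau t \<le> t/2" "t/2 - 1 \<le> tau t"
  using assms unfolding tau_def by (auto, linarith+)

lemma tau_mono: "0 \<le> t \<Longrightarrow> t \<le> t' \<Longrightarrow> tau t \<le> tau t'"
  unfolding tau_def by (intro of_nat_mono nat_mono floor_mono) auto

lemma tau_lim: "filterlim tau at_top at_top"
proof (rule filterlim_at_top_mono)
  show "filterlim (\<lambda>t::real. t/2 - 1) at_top at_top" by real_asymp
  show "\<forall>\<^sub>F t in at_top. t/2 - 1 \<le> tau t"
    using eventually_ge_at_top[of "0::real"] by eventually_elim (use tau_props in auto)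
qed

lemma time_nonneg: "t \<in> time_set disc \<Longrightarrow> 0 \<le> t"
  by (auto simp: time_set_def split: if_splits)

lemma time_0: "0 \<in> time_set disc"
  by (auto simp: time_set_def)

lemma time_add: "a \<in> time_set disc \<Longrightarrow> b \<in> time_set disc \<Longrightarrow> a + b \<in> time_set disc"
  by (auto simp: time_set_def split: if_splits) (metis of_nat_add rangeI)

lemma time_tau: assumes "t \<in> time_set disc"
  shows "tau t \<in> time_set disc" "t - tau t \<in> time_set disc"
proof -
  have "tau t \<in> time_set disc \<and> t - tau t \<in> time_set disc"
  proof (cases disc)
    case True
    then obtain n where n: "t = real n" using assms by (auto simp: time_set_def)
    have "\<lfloor>real n / 2\<rfloor> = int (n div 2)" using floor_divide_of_nat_eq[of n 2] by simp
    then have "tau t = real (n div 2)" by (simp add: tau_def n)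
    moreover have "real n - real (n div 2) \<in> range real"
      by (metis of_nat_diff div_le_dividend rangeI)
    ultimately show ?thesis using True n by (simp add: time_set_def)
  next
    case False
    then show ?thesis using assms tau_props[of t] by (auto simp: time_set_def)
  qed
  then show "tau t \<in> time_set disc" "t - tau t \<in> time_set disc" by auto
qed

lemma sup_facts:
  fixes f :: "real \<Rightarrow> real"
  assumes "t \<in> A" "\<And>s. s \<in> A \<Longrightarrow> f s \<le> B" "\<And>s. s \<in> A \<Longrightarrow> 0 \<le> f s"
  shows "bdd_above (f ` A)" "0 \<le> (SUP s\<in>A. f s)" "(SUP s\<in>A. f s) \<le> B"
proof -
  show b: "bdd_above (f ` A)" using assms by (auto intro!: bdd_aboveI[where M=B])
  show "0 \<le> (SUP s\<in>A. f s)" using cSUP_upper2[OF b assms(1)] assms by auto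
  show "(SUP s\<in>A. f s) \<le> B" using assms by (intro cSUP_least) auto
qed


theorem proposition6:
  fixes disc :: bool
    and Uc :: "(real \<Rightarrow> 'u::real_vector) set"
    and nU :: "(real \<Rightarrow> 'u) \<Rightarrow> real"
    and \<phi> :: "real \<Rightarrow> 'x::real_normed_vector \<Rightarrow> (real \<Rightarrow> 'u) \<Rightarrow> 'x"
    and h :: "'x \<Rightarrow> 'u \<Rightarrow> 'y::real_normed_vector"
  assumes "control_system disc Uc nU \<phi>"
  shows "(ISS disc Uc nU \<phi> \<and> K_bounded Uc nU h) \<longleftrightarrow>
         (IOS disc Uc nU \<phi> h \<and> IOSS disc Uc nU \<phi> h)"
proof -
  note cs = assms[unfolded control_system_def]
  define T where "T = time_set disc"
  have nU_nn: "\<And>u. u \<in> Uc \<Longrightarrow> 0 \<le> nU u" using cs[THEN conjunct2, THEN conjunct2, THEN conjunct2, THEN conjunct2, THEN conjunct1] by blast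
  have shiftU: "\<And>u \<tau>. u \<in> Uc \<Longrightarrow> \<tau> \<in> T \<Longrightarrow> shift_inp disc u \<tau> \<in> Uc \<and> nU (shift_inp disc u \<tau>) \<le> nU u"
    using cs[THEN conjunct2, THEN conjunct2, THEN conjunct2, THEN conjunct2, THEN conjunct2, THEN conjunct2, THEN conjunct2, THEN conjunct2, THEN conjunct1] unfolding T_def by blast
  have restrU: "\<And>u t. u \<in> Uc \<Longrightarrow> 0 \<le> t \<Longrightarrow> restr_inp u 0 t \<in> Uc \<and> nU (restr_inp u 0 t) \<le> nU u"
    using cs[THEN conjunct2, THEN conjunct2, THEN conjunct2, THEN conjunct2, THEN conjunct2, THEN conjunct2, THEN conjunct2, THEN conjunct2, THEN conjunct2, THEN conjunct1] by blast
  have ident: "\<And>x u. u \<in> Uc \<Longrightarrow> \<phi> 0 x u = x" using cs[THEN conjunct2, THEN conjunct2, THEN conjunct2, THEN conjunct2, THEN conjunct2, THEN conjunct2, THEN conjunct2, THEN conjunct2, THEN conjunct2, THEN conjunct2, THEN conjunct1] by blast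
  have caus: "\<And>t x u v. t \<in> T \<Longrightarrow> u \<in> Uc \<Longrightarrow> v \<in> Uc \<Longrightarrow> (\<forall>s\<in>T. s \<le> t \<longrightarrow> u s = v s) \<Longrightarrow> \<phi> t x u = \<phi> t x v"
    using cs[THEN conjunct2, THEN conjunct2, THEN conjunct2, THEN conjunct2, THEN conjunct2, THEN conjunct2, THEN conjunct2, THEN conjunct2, THEN conjunct2, THEN conjunct2, THEN conjunct2, THEN conjunct1] unfolding T_def by blast
  have cocy: "\<And>t s x u. t \<in> T \<Longrightarrow> s \<in> T \<Longrightarrow> u \<in> Uc \<Longrightarrow> \<phi> (t + s) x u = \<phi> s (\<phi> t x u) (shift_inp disc u t)"
    using cs[THEN conjunct2, THEN conjunct2, THEN conjunct2, THEN conjunct2, THEN conjunct2, THEN conjunct2, THEN conjunct2, THEN conjunct2, THEN conjunct2, THEN conjunct2, THEN conjunct2, THEN conjunct2] unfolding T_def by blast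
  have Tnn: "\<And>t. t \<in> T \<Longrightarrow> 0 \<le> t" using time_nonneg T_def by blast
  have T0: "0 \<in> T" using time_0 T_def by blast
  have shift_val: "\<And>u \<tau> r. r \<in> T \<Longrightarrow> shift_inp disc u \<tau> r = u (r + \<tau>)"
    by (simp add: shift_inp_def T_def)
  show ?thesis
  proof
    assume "ISS disc Uc nU \<phi> \<and> K_bounded Uc nU h"
    then obtain \<beta> \<gamma> \<sigma>1 \<gamma>1 where b: "class_KL \<beta>" and g: "class_Kinf \<gamma>"
      and H: "\<And>x u t. u \<in> Uc \<Longrightarrow> t \<in> T \<Longrightarrow> norm (\<phi> t x u) \<le> \<beta> (norm x) t + \<gamma> (nU u)"
      and s1: "class_K \<sigma>1" and g1: "class_K \<gamma>1"
      and Hk: "\<And>x u. u \<in> Uc \<Longrightarrow> norm (h x (u 0)) \<le> \<sigma>1 (norm x) + \<gamma>1 (nU u)"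
      unfolding ISS_def K_bounded_def T_def by blast
    have gK: "class_K \<gamma>" using Kinf_K[OF g] .
    have "IOS disc Uc nU \<phi> h"
      unfolding IOS_def
    proof (intro exI conjI ballI allI)
      show "class_KL (\<lambda>r t. \<sigma>1 (2 * \<beta> r t))" using KL_outer[OF K_scale[OF s1] b] by simp
      show "class_Kinf (\<lambda>v. (\<sigma>1 (2 * \<gamma> v) + \<gamma>1 v) + v)"
        using Kinf_of[OF K_add[OF K_comp[OF K_scale[OF s1] gK] g1]] by simp
      fix x u t assume u: "u \<in> Uc" and t: "t \<in> time_set disc"
      then have t': "t \<in> T" by (simp add: T_def)
      define w where "w = shift_inp disc u t"
      have w: "w \<in> Uc" "nU w \<le> nU u" using shiftU[OF u t'] w_def by auto
      have w0: "w 0 = u t" using shift_val[OF T0] w_def by simp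
      have "norm (out \<phi> h t x u) = norm (h (\<phi> t x u) (w 0))" by (simp add: out_def w0)
      also have "\<dots> \<le> \<sigma>1 (norm (\<phi> t x u)) + \<gamma>1 (nU w)" using Hk[OF w(1)] .
      also have "\<dots> \<le> \<sigma>1 (\<beta> (norm x) t + \<gamma> (nU u)) + \<gamma>1 (nU u)"
        using K_mono[OF s1 _ H[OF u t']] K_mono[OF g1 nU_nn[OF w(1)] w(2)] by (intro add_mono) auto
      also have "\<dots> \<le> (\<sigma>1 (2 * \<beta> (norm x) t) + \<sigma>1 (2 * \<gamma> (nU u))) + \<gamma>1 (nU u)"
        using K_sum2[OF s1 KL_nonneg[OF b _ Tnn[OF t']] K_nonneg[OF gK nU_nn[OF u]]] by simp
      also have "\<dots> \<le> \<sigma>1 (2 * \<beta> (norm x) t) + ((\<sigma>1 (2 * \<gamma> (nU u)) + \<gamma>1 (nU u)) + nU u)"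
        using nU_nn[OF u] by simp
      finally show "norm (out \<phi> h t x u) \<le> \<sigma>1 (2 * \<beta> (norm x) t) + ((\<sigma>1 (2 * \<gamma> (nU u)) + \<gamma>1 (nU u)) + nU u)" .
    qed
    moreover have "IOSS disc Uc nU \<phi> h"
      unfolding IOSS_def
    proof (intro exI conjI ballI allI impI)
      show "class_KL \<beta>" "class_K \<gamma>" "class_K (\<lambda>s. s)" using b gK K_id by auto
      fix x u t assume u: "u \<in> Uc" and t: "t \<in> time_set disc"
        and bdd: "bdd_above ((\<lambda>s. norm (out \<phi> h s x u)) ` {s\<in>time_set disc. s \<le> t})"
      then have t': "t \<in> T" by (simp add: T_def)
      have r: "restr_inp u 0 t \<in> Uc" using restrU[OF u Tnn[OF t']] by auto
      have "\<phi> t x u = \<phi> t x (restr_inp u 0 t)"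
        using caus[OF t' u r] Tnn by (auto simp: restr_inp_def)
      then have "norm (\<phi> t x u) \<le> \<beta> (norm x) t + \<gamma> (nU (restr_inp u 0 t))" using H[OF r t'] by simp
      moreover have "0 \<le> (SUP s\<in>{s\<in>time_set disc. s \<le> t}. norm (out \<phi> h s x u))"
        using cSUP_upper2[OF bdd, of t] t by auto
      ultimately show "norm (\<phi> t x u) \<le> \<beta> (norm x) t + \<gamma> (nU (restr_inp u 0 t))
          + (SUP s\<in>{s\<in>time_set disc. s \<le> t}. norm (out \<phi> h s x u))" by simp
    qed
    ultimately show "IOS disc Uc nU \<phi> h \<and> IOSS disc Uc nU \<phi> h" by blast
  next
    assume asm: "IOS disc Uc nU \<phi> h \<and> IOSS disc Uc nU \<phi> h"
    then obtain \<beta>y \<gamma>y where byy: "class_KL \<beta>y" and gy: "class_Kinf \<gamma>y"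
      and Hy0: "\<forall>x. \<forall>u\<in>Uc. \<forall>t\<in>T. norm (out \<phi> h t x u) \<le> \<beta>y (norm x) t + \<gamma>y (nU u)"
      unfolding IOS_def T_def by blast
    have Hy: "\<And>x u t. u \<in> Uc \<Longrightarrow> t \<in> T \<Longrightarrow> norm (out \<phi> h t x u) \<le> \<beta>y (norm x) t + \<gamma>y (nU u)"
      using Hy0 by blast
    obtain \<beta> \<gamma>1 \<gamma>2 where b: "class_KL \<beta>" and g1: "class_K \<gamma>1" and g2: "class_K \<gamma>2"
      and Hs0: "\<forall>x. \<forall>u\<in>Uc. \<forall>t\<in>time_set disc.
        bdd_above ((\<lambda>s. norm (out \<phi> h s x u)) ` {s\<in>time_set disc. s \<le> t}) \<longrightarrow>
        norm (\<phi> t x u) \<le> \<beta> (norm x) t + \<gamma>1 (nU (restr_inp u 0 t))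
          + \<gamma>2 (SUP s\<in>{s\<in>time_set disc. s \<le> t}. norm (out \<phi> h s x u))"
      using asm unfolding IOSS_def apply (elim exE conjE)
      subgoal for b g1 g2 apply (rule that[of b g1 g2]) apply assumption+ done done
    have Hs: "\<And>x u t. u \<in> Uc \<Longrightarrow> t \<in> T \<Longrightarrow>
        bdd_above ((\<lambda>s. norm (out \<phi> h s x u)) ` {s\<in>T. s \<le> t}) \<Longrightarrow>
        norm (\<phi> t x u) \<le> \<beta> (norm x) t + \<gamma>1 (nU (restr_inp u 0 t))
          + \<gamma>2 (SUP s\<in>{s\<in>T. s \<le> t}. norm (out \<phi> h s x u))"
      using Hs0 unfolding T_def by blast
    have gyK: "class_K \<gamma>y" using Kinf_K[OF gy] .
    have "K_bounded Uc nU h"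
      unfolding K_bounded_def
    proof (intro exI conjI ballI allI)
      show "class_K (\<lambda>r. \<beta>y r 0)" "class_K \<gamma>y" using KL_K[OF byy] gyK by auto
      fix x u assume u: "u \<in> Uc"
      show "norm (h x (u 0)) \<le> \<beta>y (norm x) 0 + \<gamma>y (nU u)"
        using Hy[OF u T0, of x] by (simp add: out_def ident[OF u])
    qed
    moreover have "ISS disc Uc nU \<phi>"
    proof -
      have A: "norm (\<phi> t x u) \<le> \<beta> (norm x) t + \<gamma>1 (nU u) + \<gamma>2 (\<beta>y (norm x) 0 + \<gamma>y (nU u))"
        if u: "u \<in> Uc" and t: "t \<in> T" for x u t
      proof -
        define B where "B = \<beta>y (norm x) 0 + \<gamma>y (nU u)"
        have bnd: "norm (out \<phi> h s x u) \<le> B" if "s \<in> {s\<in>T. s \<le> t}" for s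
        proof -
          have "s \<in> T" using that by auto
          then have "norm (out \<phi> h s x u) \<le> \<beta>y (norm x) s + \<gamma>y (nU u)" using Hy[OF u] by blast
          moreover have "\<beta>y (norm x) s \<le> \<beta>y (norm x) 0" using KL_anti[OF byy, of "norm x" 0 s] Tnn[OF \<open>s \<in> T\<close>] by auto
          ultimately show ?thesis unfolding B_def by linarith
        qed
        have tS: "t \<in> {s\<in>T. s \<le> t}" using t by auto
        note sf = sup_facts[of t "{s\<in>T. s \<le> t}" "\<lambda>s. norm (out \<phi> h s x u)" B, OF tS bnd norm_ge_zero]
        have r: "restr_inp u 0 t \<in> Uc" "nU (restr_inp u 0 t) \<le> nU u" using restrU[OF u Tnn[OF t]] by auto
        have "\<gamma>1 (nU (restr_inp u 0 t)) \<le> \<gamma>1 (nU u)" using K_mono[OF g1 nU_nn[OF r(1)] r(2)] .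
        moreover have "\<gamma>2 (SUP s\<in>{s\<in>T. s \<le> t}. norm (out \<phi> h s x u)) \<le> \<gamma>2 B"
          using K_mono[OF g2 sf(2) sf(3)] .
        ultimately show ?thesis using Hs[OF u t sf(1)] unfolding B_def by linarith
      qed
      have KLt: "class_KL (\<lambda>r t. \<beta> r (tau t))"
        using KL_time[OF b tau_props(1) tau_mono tau_lim] .
      have KLty: "class_KL (\<lambda>r t. \<beta>y r (tau t))"
        using KL_time[OF byy tau_props(1) tau_mono tau_lim] .
      have k1: "class_KL (\<lambda>r t. \<beta> (3 * \<beta> r (tau t)) (tau t))"
        using KL_KL[OF KL_inner[OF K_lin[of 3] KLt] KLt] by simp
      have kg: "class_K (\<lambda>s. 6 * \<gamma>2 (2 * \<beta>y s 0))"
        using K_comp[OF K_lin[of 6] K_comp[OF K_scale[OF g2, of 2] KL_K[OF byy, of 0]]] by simp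
      have k2: "class_KL (\<lambda>r t. \<beta> (6 * \<gamma>2 (2 * \<beta>y r 0)) (tau t))"
        using KL_inner[OF kg KLt] by simp
      have k3: "class_KL (\<lambda>r t. \<gamma>2 (2 * \<beta>y r (tau t)))"
        using KL_outer[OF K_scale[OF g2, of 2] KLty] by simp
      have KLf: "class_KL (\<lambda>r t. \<beta> (3 * \<beta> r (tau t)) (tau t) + \<beta> (6 * \<gamma>2 (2 * \<beta>y r 0)) (tau t)
          + \<gamma>2 (2 * \<beta>y r (tau t)))"
        using KL_add[OF KL_add[OF k1 k2] k3] by simp
      have bK0: "class_K (\<lambda>r. \<beta> r 0)" using KL_K[OF b] by simp
      have q1: "class_K (\<lambda>v. \<beta> (3 * \<gamma>1 v) 0)"
        using K_comp[OF bK0 K_comp[OF K_lin[of 3] g1]] by simp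
      have q2: "class_K (\<lambda>v. \<beta> (6 * \<gamma>2 (2 * \<gamma>y v)) 0)"
        using K_comp[OF bK0 K_comp[OF K_lin[of 6] K_comp[OF K_scale[OF g2, of 2] gyK]]] by simp
      have q3: "class_K (\<lambda>v. \<gamma>2 (2 * \<gamma>y v))"
        using K_comp[OF K_scale[OF g2, of 2] gyK] by simp
      have Kf: "class_Kinf (\<lambda>v. (\<beta> (3 * \<gamma>1 v) 0 + \<beta> (6 * \<gamma>2 (2 * \<gamma>y v)) 0 + \<gamma>1 v
          + \<gamma>2 (2 * \<gamma>y v)) + v)"
        using Kinf_of[OF K_add[OF K_add[OF K_add[OF q1 q2] g1] q3]] by simp
      show ?thesis
        unfolding ISS_def
      proof (intro exI conjI ballI allI)
        show "class_KL (\<lambda>r t. \<beta> (3 * \<beta> r (tau t)) (tau t) + \<beta> (6 * \<gamma>2 (2 * \<beta>y r 0)) (tau t)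
          + \<gamma>2 (2 * \<beta>y r (tau t)))" using KLf .
        show "class_Kinf (\<lambda>v. (\<beta> (3 * \<gamma>1 v) 0 + \<beta> (6 * \<gamma>2 (2 * \<gamma>y v)) 0 + \<gamma>1 v
          + \<gamma>2 (2 * \<gamma>y v)) + v)" using Kf .
        fix x :: 'x and u t assume u: "u \<in> Uc" and t0: "t \<in> time_set disc"
        then have t: "t \<in> T" by (simp add: T_def)
        define r where "r = norm x"
        define v where "v = nU u"
        define \<tau> where "\<tau> = tau t"
        define s where "s = t - \<tau>"
        have r0: "0 \<le> r" and v0: "0 \<le> v" using nU_nn[OF u] by (auto simp: r_def v_def)
        have \<tau>T: "\<tau> \<in> T" and sT: "s \<in> T" using time_tau[OF t0] by (auto simp: \<tau>_def s_def T_def)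
        have \<tau>0: "0 \<le> \<tau>" using Tnn[OF \<tau>T] .
        have \<tau>s: "\<tau> \<le> s" using tau_props[OF Tnn[OF t]] by (simp add: s_def \<tau>_def)
        define z where "z = \<phi> \<tau> x u"
        define w where "w = shift_inp disc u \<tau>"
        have w: "w \<in> Uc" "nU w \<le> v" using shiftU[OF u \<tau>T] by (auto simp: w_def v_def)
        have eq: "\<phi> t x u = \<phi> s z w"
          using cocy[OF \<tau>T sT u, of x] by (simp add: s_def z_def w_def)
        have outs: "out \<phi> h q z w = out \<phi> h (\<tau> + q) x u" if "q \<in> T" for q
          using cocy[OF \<tau>T that u, of x] shift_val[OF that, of u \<tau>]
          by (simp add: out_def z_def w_def add.commute)
        define C where "C = \<beta>y r \<tau> + \<gamma>y v"
        have bnd: "norm (out \<phi> h q z w) \<le> C" if "q \<in> {q\<in>T. q \<le> s}" for q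
        proof -
          have qT: "q \<in> T" using that by auto
          have "\<tau> + q \<in> T" using time_add[of \<tau> disc q] \<tau>T qT by (simp add: T_def)
          then have "norm (out \<phi> h (\<tau> + q) x u) \<le> \<beta>y r (\<tau> + q) + \<gamma>y v"
            using Hy[OF u] by (simp add: r_def v_def)
          moreover have "\<beta>y r (\<tau> + q) \<le> \<beta>y r \<tau>" using KL_anti[OF byy r0 \<tau>0] Tnn[OF qT] by auto
          ultimately show ?thesis using outs[OF qT] unfolding C_def by simp
        qed
        have sS: "s \<in> {q\<in>T. q \<le> s}" using sT by auto
        note sf = sup_facts[of s "{q\<in>T. q \<le> s}" "\<lambda>q. norm (out \<phi> h q z w)" C, OF sS bnd norm_ge_zero]
        have rw: "restr_inp w 0 s \<in> Uc" "nU (restr_inp w 0 s) \<le> nU w" using restrU[OF w(1) Tnn[OF sT]] by auto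
        have st1: "norm (\<phi> t x u) \<le> \<beta> (norm z) s + \<gamma>1 (nU (restr_inp w 0 s))
          + \<gamma>2 (SUP q\<in>{q\<in>T. q \<le> s}. norm (out \<phi> h q z w))"
          using Hs[OF w(1) sT sf(1)] eq by simp
        have st2: "\<beta> (norm z) s \<le> \<beta> (norm z) \<tau>" using KL_anti[OF b norm_ge_zero \<tau>0 \<tau>s] .
        have st3: "\<gamma>1 (nU (restr_inp w 0 s)) \<le> \<gamma>1 v"
          using K_mono[OF g1 nU_nn[OF rw(1)]] rw(2) w(2) by auto
        have st4: "\<gamma>2 (SUP q\<in>{q\<in>T. q \<le> s}. norm (out \<phi> h q z w)) \<le> \<gamma>2 C"
          using K_mono[OF g2 sf(2) sf(3)] .
        define a where "a = \<beta> r \<tau>"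
        define bb where "bb = \<gamma>1 v"
        define c where "c = \<gamma>2 (\<beta>y r 0 + \<gamma>y v)"
        define c1 where "c1 = \<gamma>2 (2 * \<beta>y r 0)"
        define c2 where "c2 = \<gamma>2 (2 * \<gamma>y v)"
        have a0: "0 \<le> a" using KL_nonneg[OF b r0 \<tau>0] by (simp add: a_def)
        have b0: "0 \<le> bb" using K_nonneg[OF g1 v0] by (simp add: bb_def)
        have by0: "0 \<le> \<beta>y r 0" "0 \<le> \<gamma>y v" "0 \<le> \<beta>y r \<tau>"
          using KL_nonneg[OF byy r0] K_nonneg[OF gyK v0] \<tau>0 by auto
        have c0: "0 \<le> c" "0 \<le> c1" "0 \<le> c2" using K_nonneg[OF g2] by0 by (auto simp: c_def c1_def c2_def)
        have zb: "norm z \<le> a + bb + c" using A[OF u \<tau>T, of x] by (simp add: z_def a_def bb_def c_def r_def v_def)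
        have cb: "c \<le> c1 + c2" using K_sum2[OF g2 by0(1) by0(2)] by (simp add: c_def c1_def c2_def)
        have bK: "class_K (\<lambda>r. \<beta> r \<tau>)" using KL_K[OF b \<tau>0] .
        have e1: "\<beta> (norm z) \<tau> \<le> \<beta> (a + bb + c) \<tau>" using KL_mono[OF b norm_ge_zero zb \<tau>0] .
        have e2: "\<beta> (a + bb + c) \<tau> \<le> \<beta> (3*a) \<tau> + \<beta> (3*bb) \<tau> + \<beta> (3*c) \<tau>"
          using K_sum3[OF bK a0 b0 c0(1)] .
        have e3: "\<beta> (3*bb) \<tau> \<le> \<beta> (3*bb) 0" using KL_anti[OF b _ order_refl \<tau>0] b0 by simp
        have e4: "\<beta> (3*c) \<tau> \<le> \<beta> (3*c1 + 3*c2) \<tau>" using KL_mono[OF b _ _ \<tau>0, of "3*c" "3*c1+3*c2"] c0 cb by simp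
        have e5: "\<beta> (3*c1 + 3*c2) \<tau> \<le> \<beta> (2*(3*c1)) \<tau> + \<beta> (2*(3*c2)) \<tau>"
          using K_sum2[OF bK, of "3*c1" "3*c2"] c0 by simp
        have e6: "\<beta> (2*(3*c2)) \<tau> \<le> \<beta> (2*(3*c2)) 0" using KL_anti[OF b _ order_refl \<tau>0] c0 by simp
        have e7: "\<gamma>2 C \<le> \<gamma>2 (2 * \<beta>y r \<tau>) + \<gamma>2 (2 * \<gamma>y v)"
          using K_sum2[OF g2 by0(3) by0(2)] by (simp add: C_def)
        have fin: "norm (\<phi> t x u) \<le> (\<beta> (3 * \<beta> r \<tau>) \<tau> + \<beta> (6 * \<gamma>2 (2 * \<beta>y r 0)) \<tau> + \<gamma>2 (2 * \<beta>y r \<tau>))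
          + ((\<beta> (3 * \<gamma>1 v) 0 + \<beta> (6 * \<gamma>2 (2 * \<gamma>y v)) 0 + \<gamma>1 v + \<gamma>2 (2 * \<gamma>y v)) + v)"
          using st1 st2 st3 st4 e1 e2 e3 e4 e5 e6 e7 v0 unfolding a_def bb_def c1_def c2_def by simp
        then show "norm (\<phi> t x u) \<le> (\<beta> (3 * \<beta> (norm x) (tau t)) (tau t) + \<beta> (6 * \<gamma>2 (2 * \<beta>y (norm x) 0)) (tau t)
          + \<gamma>2 (2 * \<beta>y (norm x) (tau t)))
          + ((\<beta> (3 * \<gamma>1 (nU u)) 0 + \<beta> (6 * \<gamma>2 (2 * \<gamma>y (nU u))) 0 + \<gamma>1 (nU u) + \<gamma>2 (2 * \<gamma>y (nU u))) + nU u)"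
          by (simp add: r_def v_def \<tau>_def)
      qed
    qed
    ultimately show "ISS disc Uc nU \<phi> \<and> K_bounded Uc nU h" by blast
  qed
qed

end
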